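(* Let $p$ be prime, $f:\mathrm{GF}(p)^n\to\mathrm{GF}(p)$ a polynomial function, and $t=x_{i_1}^{m_1}\cdots x_{i_k}^{m_k}$ with distinct indices and $1\le m_\ell\le p-1$. Write $f=t\,f_{S(t)}+r$ where no monomial of $r$ is divisible by $t$. Then $\deg(f_t)\le\deg(f_{S(t)})$. In particular, if $\deg(t)=\deg(f)-1$, then $f_t$ has total degree at most one (it is linear or constant).
   Context: Polynomial functions over $\mathrm{GF}(p)$ are represented by their unique polynomial of degree at most $p-1$ in each variable; $\deg$ is total degree, and $f_{S(t)}, r$ are uniquely determined by this representative. $f_t=\Delta^{(m_1)}_{\mathbf{e}_{i_1},\ldots,\mathbf{e}_{i_1}}\cdots\Delta^{(m_k)}_{\mathbf{e}_{i_k},\ldots,\mathbf{e}_{i_k}} f$ (difference $m_\ell$ times w.r.t. $x_{i_\ell}$ with step $1$), where $(\Delta_{\mathbf{a}} f)(\mathbf{x}) = f(\mathbf{x}+\mathbf{a})-f(\mathbf{x})$. *)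

theory Defs
  imports "Berlekamp_Zassenhaus.Finite_Field"
begin

text \<open>Points of GF(p)^n are functions 'n => 'p mod_ring (with 'n a finite index type
  of n variables and p = CARD('p) prime). Exponent vectors are 'n => nat.\<close>

definition reduced_exps :: "nat \<Rightarrow> ('n::finite \<Rightarrow> nat) set" where
  "reduced_exps p = {e. \<forall>i. e i < p}"

definition monom_eval :: "('n::finite \<Rightarrow> nat) \<Rightarrow> ('n \<Rightarrow> 'a::comm_ring_1) \<Rightarrow> 'a" where
  "monom_eval e x = (\<Prod>i\<in>UNIV. x i ^ e i)"

definition peval :: "(('n::finite \<Rightarrow> nat) \<Rightarrow> 'p::prime_card mod_ring) \<Rightarrow> ('n \<Rightarrow> 'p mod_ring) \<Rightarrow> 'p mod_ring" where
  "peval c x = (\<Sum>e\<in>reduced_exps CARD('p). c e * monom_eval e x)"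

definition coeffs :: "(('n::finite \<Rightarrow> 'p::prime_card mod_ring) \<Rightarrow> 'p mod_ring) \<Rightarrow> ('n \<Rightarrow> nat) \<Rightarrow> 'p mod_ring" where
  "coeffs f = (THE c. (\<forall>e. e \<notin> reduced_exps CARD('p) \<longrightarrow> c e = 0) \<and> (\<forall>x. f x = peval c x))"

text \<open>Total degree of the representative; the zero polynomial gets degree -1 (standing in for -infinity).\<close>
definition pdeg :: "(('n::finite \<Rightarrow> 'p::prime_card mod_ring) \<Rightarrow> 'p mod_ring) \<Rightarrow> int" where
  "pdeg f = (if (\<forall>e. coeffs f e = 0) then -1
             else int (Max {sum e UNIV | e. coeffs f e \<noteq> 0}))"

definition delta :: "'n \<Rightarrow> (('n \<Rightarrow> 'a::ring_1) \<Rightarrow> 'a) \<Rightarrow> ('n \<Rightarrow> 'a) \<Rightarrow> 'a" where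
  "delta i f x = f (x(i := x i + 1)) - f x"

text \<open>f_t for t = x_{i_1}^{m_1} ... x_{i_k}^{m_k}, given as index list is and exponent list ms.\<close>
definition ft :: "'n list \<Rightarrow> nat list \<Rightarrow> (('n \<Rightarrow> 'a::ring_1) \<Rightarrow> 'a) \<Rightarrow> (('n \<Rightarrow> 'a) \<Rightarrow> 'a)" where
  "ft is ms f = foldr (\<lambda>(i, m) g. (delta i ^^ m) g) (zip is ms) f"

definition texp :: "'n list \<Rightarrow> nat list \<Rightarrow> 'n \<Rightarrow> nat" where
  "texp is ms j = (\<Sum>l<length is. if is ! l = j then ms ! l else 0)"

text \<open>f_{S(t)}: the quotient by t of the part of the representative of f consisting of
  monomials divisible by t, so that f = t * f_{S(t)} + r.\<close>
definition fS :: "'n list \<Rightarrow> nat list \<Rightarrow> (('n::finite \<Rightarrow> 'p::prime_card mod_ring) \<Rightarrow> 'p mod_ring)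
    \<Rightarrow> ('n \<Rightarrow> 'p mod_ring) \<Rightarrow> 'p mod_ring" where
  "fS is ms f x = (\<Sum>e\<in>reduced_exps CARD('p).
      if (\<forall>j. texp is ms j \<le> e j) then coeffs f e * monom_eval (\<lambda>j. e j - texp is ms j) x else 0)"

end

theory Submission
  imports Defs "HOL-Library.Cardinality"
begin


lemma R_PiE: "reduced_exps n = (PiE UNIV (\<lambda>_. {..<n}) :: ('n::finite \<Rightarrow> nat) set)"
  by (auto simp: reduced_exps_def PiE_def extensional_def)

lemma finite_R: "finite (reduced_exps n :: ('n::finite \<Rightarrow> nat) set)"
  unfolding R_PiE by (intro finite_PiE) auto

lemma card_R: "card (reduced_exps n :: ('n::finite \<Rightarrow> nat) set) = n ^ CARD('n)"
  unfolding R_PiE by (subst card_PiE) auto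




abbreviation RR :: "('n::finite \<Rightarrow> nat) set" where "RR \<equiv> reduced_exps CARD('p::prime_card)"

lemma peval_add: "peval (\<lambda>e. c e + d e) x = peval c x + peval d x"
  unfolding peval_def by (simp add: sum.distrib distrib_right)

lemma peval_smult: "peval (\<lambda>e. a * c e) x = a * peval c x"
  unfolding peval_def by (simp add: sum_distrib_left mult.assoc)

lemma peval_zero: "peval (\<lambda>e. 0) x = 0"
  unfolding peval_def by simp

definition Poly :: "('n::finite \<Rightarrow> nat) set \<Rightarrow> (('n \<Rightarrow> 'p::prime_card mod_ring) \<Rightarrow> 'p mod_ring) \<Rightarrow> bool" where
  "Poly B g \<longleftrightarrow> (\<exists>c. (\<forall>e. c e \<noteq> 0 \<longrightarrow> e \<in> B \<and> e \<in> reduced_exps CARD('p)) \<and> g = peval c)"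

lemma Poly_zero: "Poly B (\<lambda>x. 0)"
  unfolding Poly_def by (intro exI[of _ "\<lambda>e. 0"]) (auto simp: peval_zero)

lemma Poly_add: "Poly B g \<Longrightarrow> Poly B h \<Longrightarrow> Poly B (\<lambda>x. g x + h x)"
  unfolding Poly_def
proof (elim exE conjE)
  fix c d assume c: "\<forall>e. c e \<noteq> 0 \<longrightarrow> e \<in> B \<and> e \<in> reduced_exps CARD('b)" "g = peval c"
    and d: "\<forall>e. d e \<noteq> 0 \<longrightarrow> e \<in> B \<and> e \<in> reduced_exps CARD('b)" "h = peval d"
  show "\<exists>c. (\<forall>e. c e \<noteq> 0 \<longrightarrow> e \<in> B \<and> e \<in> reduced_exps CARD('b)) \<and> (\<lambda>x. g x + h x) = peval c"
    apply (intro exI[of _ "\<lambda>e. c e + d e"] conjI)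
    using c(1) d(1) apply (metis add.right_neutral)
    using c(2) d(2) by (auto simp: peval_add)
qed

lemma Poly_smult: "Poly B g \<Longrightarrow> Poly B (\<lambda>x. a * g x)"
  unfolding Poly_def
proof (elim exE conjE)
  fix c assume c: "\<forall>e. c e \<noteq> 0 \<longrightarrow> e \<in> B \<and> e \<in> reduced_exps CARD('b)" "g = peval c"
  show "\<exists>c. (\<forall>e. c e \<noteq> 0 \<longrightarrow> e \<in> B \<and> e \<in> reduced_exps CARD('b)) \<and> (\<lambda>x. a * g x) = peval c"
    apply (intro exI[of _ "\<lambda>e. a * c e"] conjI)
    using c by (auto simp: peval_smult)
qed

lemma Poly_mono: "Poly B g \<Longrightarrow> B \<subseteq> B' \<Longrightarrow> Poly B' g"
  unfolding Poly_def by blast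

lemma Poly_sum: "finite K \<Longrightarrow> (\<And>k. k \<in> K \<Longrightarrow> Poly B (g k)) \<Longrightarrow> Poly B (\<lambda>x. \<Sum>k\<in>K. g k x)"
proof (induction K rule: finite_induct)
  case empty then show ?case by (simp add: Poly_zero)
next
  case (insert a K)
  then show ?case by (simp add: Poly_add)
qed

lemma peval_delta: "e \<in> reduced_exps CARD('p) \<Longrightarrow>
  peval (\<lambda>d. if d = e then 1 else 0) x = monom_eval e (x :: 'n::finite \<Rightarrow> 'p::prime_card mod_ring)"
proof -
  assume e: "e \<in> reduced_exps CARD('p)"
  have eq: "(\<lambda>d. (if d = e then 1 else 0) * monom_eval d x) = (\<lambda>d. if d = e then monom_eval e x else 0)"
    by auto
  show ?thesis unfolding peval_def eq using e by (simp add: finite_R)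
qed

lemma Poly_monom: "e \<in> B \<Longrightarrow> e \<in> reduced_exps CARD('p) \<Longrightarrow> Poly B (monom_eval e :: ('n::finite \<Rightarrow> 'p::prime_card mod_ring) \<Rightarrow> _)"
  unfolding Poly_def
  apply (intro exI[of _ "\<lambda>d. if d = e then 1 else 0"] conjI)
  apply auto[1]
  apply (rule ext)
  apply (simp add: peval_delta)
  done

lemma delta_monom:
  "delta i (monom_eval e) = (\<lambda>x. \<Sum>k<e i. of_nat (e i choose k) * monom_eval (e(i:=k)) (x :: 'n::finite \<Rightarrow> 'a::comm_ring_1))"
proof (rule ext)
  fix x :: "'n \<Rightarrow> 'a"
  define rest where "rest = (\<Prod>j\<in>UNIV-{i}. x j ^ e j)"
  have m: "monom_eval d y = y i ^ d i * (\<Prod>j\<in>UNIV-{i}. y j ^ d j)" for d and y :: "'n \<Rightarrow> 'a"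
    unfolding monom_eval_def by (subst prod.remove[of _ i]) auto
  have r1: "(\<Prod>j\<in>UNIV-{i}. (x(i := x i + 1)) j ^ e j) = rest"
    unfolding rest_def by (intro prod.cong) auto
  have r2: "(\<Prod>j\<in>UNIV-{i}. x j ^ (e(i:=k)) j) = rest" for k
    unfolding rest_def by (intro prod.cong) auto
  have b: "(x i + 1) ^ e i = (\<Sum>k\<le>e i. of_nat (e i choose k) * x i ^ k)"
    by (subst binomial_ring) simp
  have b2: "(x i + 1) ^ e i - x i ^ e i = (\<Sum>k<e i. of_nat (e i choose k) * x i ^ k)"
    unfolding b by (simp add: lessThan_Suc_atMost[symmetric])
  have "delta i (monom_eval e) x = ((x i + 1) ^ e i - x i ^ e i) * rest"
    unfolding delta_def m r1 by (simp add: rest_def[symmetric] left_diff_distrib)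
  also have "\<dots> = (\<Sum>k<e i. of_nat (e i choose k) * x i ^ k * rest)"
    unfolding b2 by (simp add: sum_distrib_right)
  also have "\<dots> = (\<Sum>k<e i. of_nat (e i choose k) * monom_eval (e(i:=k)) x)"
    unfolding m r2 by (simp add: mult.assoc)
  finally show "delta i (monom_eval e) x = (\<Sum>k<e i. of_nat (e i choose k) * monom_eval (e(i:=k)) x)" .
qed

definition Dset :: "'n \<Rightarrow> ('n \<Rightarrow> nat) set \<Rightarrow> ('n \<Rightarrow> nat) set" where
  "Dset i B = {e'. \<exists>e\<in>B. e' i < e i \<and> (\<forall>j. e' j \<le> e j)}"

lemma Poly_delta_monom:
  assumes "e \<in> B" "e \<in> reduced_exps CARD('p)"
  shows "Poly (Dset i B) (delta i (monom_eval e :: ('n::finite \<Rightarrow> 'p::prime_card mod_ring) \<Rightarrow> _))"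
  unfolding delta_monom
proof (intro Poly_sum Poly_smult Poly_monom)
  fix k assume "k \<in> {..<e i}"
  then show "e(i := k) \<in> Dset i B" "e(i := k) \<in> reduced_exps CARD('p)"
    using assms by (auto simp: Dset_def reduced_exps_def intro!: bexI[of _ e] dest: less_trans)
qed auto

lemma Poly_delta:
  assumes "Poly B g"
  shows "Poly (Dset i B) (delta i g)"
proof -
  obtain c where c: "\<forall>e. c e \<noteq> 0 \<longrightarrow> e \<in> B \<and> e \<in> reduced_exps CARD('b)" "g = peval c"
    using assms unfolding Poly_def by blast
  have eq: "delta i g = (\<lambda>x. \<Sum>e\<in>reduced_exps CARD('b). c e * delta i (monom_eval e) x)"
    apply (rule ext)
    apply (simp only: c(2) delta_def peval_def)
    apply (simp only: right_diff_distrib sum_subtractf)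
    done
  have "Poly (Dset i B) (\<lambda>x. \<Sum>e\<in>reduced_exps CARD('b). c e * delta i (monom_eval e) x)"
  proof (intro Poly_sum finite_R)
    fix e :: "'a \<Rightarrow> nat"
    show "Poly (Dset i B) (\<lambda>x. c e * delta i (monom_eval e) x)"
    proof (cases "c e = 0")
      case True then show ?thesis by (simp add: Poly_zero)
    next
      case False then show ?thesis using c(1) by (intro Poly_smult Poly_delta_monom) auto
    qed
  qed
  then show ?thesis using eq by simp
qed




definition U :: "('n \<Rightarrow> nat) set \<Rightarrow> ('n \<Rightarrow> nat) \<Rightarrow> ('n \<Rightarrow> nat) set" where
  "U B s = {e. \<exists>d\<in>B. \<forall>j. e j + s j \<le> d j}"

lemma Dset_U: "Dset i (U B s) \<subseteq> U B (s(i := s i + 1))"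
proof
  fix e' assume "e' \<in> Dset i (U B s)"
  then obtain e d where e: "e' i < e i" "\<forall>j. e' j \<le> e j" and d: "d \<in> B" "\<forall>j. e j + s j \<le> d j"
    unfolding Dset_def U_def by blast
  have "\<forall>j. e' j + (s(i := s i + 1)) j \<le> d j"
  proof
    fix j
    show "e' j + (s(i := s i + 1)) j \<le> d j"
    proof (cases "j = i")
      case True then show ?thesis using e d(2)[rule_format, of i] by simp
    next
      case False then show ?thesis using e(2)[rule_format, of j] d(2)[rule_format, of j] by simp
    qed
  qed
  then show "e' \<in> U B (s(i := s i + 1))" using d(1) unfolding U_def by blast
qed

lemma Poly_iter: "Poly (U B s) g \<Longrightarrow> Poly (U B (s(i := s i + m))) ((delta i ^^ m) g)"
proof (induction m)
  case 0 then show ?case by simp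
next
  case (Suc m)
  have "Poly (Dset i (U B (s(i := s i + m)))) ((delta i ^^ Suc m) g)"
    using Poly_delta[where i=i, OF Suc.IH[OF Suc.prems]] by (simp add: fun_upd_def)
  then have "Poly (U B ((s(i := s i + m))(i := (s(i := s i + m)) i + 1))) ((delta i ^^ Suc m) g)"
    by (rule Poly_mono[OF _ Dset_U])
  moreover have "(s(i := s i + m))(i := (s(i := s i + m)) i + 1) = s(i := s i + Suc m)"
    by (rule ext) simp
  ultimately show ?case by metis
qed

lemma texp_Nil: "texp [] ms j = 0"
  unfolding texp_def by simp

lemma texp_Cons: "texp (i#is) (m#ms) j = (if i = j then m else 0) + texp is ms j"
  unfolding texp_def by (simp only: length_Cons sum.lessThan_Suc_shift nth_Cons_0 nth_Cons_Suc)

lemma ft_Nil: "ft [] [] g = g"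
  unfolding ft_def by simp

lemma ft_Cons: "ft (i#is) (m#ms) g = (delta i ^^ m) (ft is ms g)"
  unfolding ft_def by simp

lemma Poly_ft: "length ms = length is \<Longrightarrow> Poly (U B s) g \<Longrightarrow> Poly (U B (\<lambda>j. s j + texp is ms j)) (ft is ms g)"
proof (induction ms "is" rule: list_induct2)
  case Nil then show ?case by (simp add: texp_Nil ft_Nil)
next
  case (Cons m ms i "is")
  have "Poly (U B ((\<lambda>j. s j + texp is ms j)(i := s i + texp is ms i + m))) (ft (i#is) (m#ms) g)"
    unfolding ft_Cons by (rule Poly_iter[OF Cons.IH[OF Cons.prems]])
  moreover have "(\<lambda>j. s j + texp is ms j)(i := s i + texp is ms i + m) = (\<lambda>j. s j + texp (i#is) (m#ms) j)"
    by (rule ext) (simp add: texp_Cons)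
  ultimately show ?case by metis
qed

lemma sum_texp: "length ms = length is \<Longrightarrow> sum (texp is ms) (UNIV :: 'n::finite set) = sum_list ms"
proof (induction ms "is" rule: list_induct2)
  case Nil then show ?case by (simp add: texp_Nil)
next
  case (Cons m ms i "is")
  have "sum (texp (i#is) (m#ms)) (UNIV :: 'n set) = (\<Sum>j\<in>UNIV. if i = j then m else 0) + sum (texp is ms) UNIV"
    unfolding texp_Cons by (rule sum.distrib)
  also have "(\<Sum>j\<in>(UNIV :: 'n set). if i = j then m else 0) = m" by simp
  finally show ?case using Cons.IH by simp
qed




lemma card_ge2: "CARD('p::prime_card) \<ge> 2"
  using prime_card[where 'a='p] prime_ge_2_nat by blast

lemma pow_pm1: "(z :: 'p::prime_card mod_ring) ^ (CARD('p) - 1) = (if z = 0 then 0 else 1)"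
proof (cases "z = 0")
  case True
  then show ?thesis using card_ge2[where 'p='p] by simp
next
  case False
  have "z ^ CARD('p) = z"
    using finite_field_power_card_eq_same[of z] by simp
  moreover have "z ^ CARD('p) = z * z ^ (CARD('p) - 1)"
    using card_ge2[where 'p='p] by (metis Suc_diff_1 less_le_trans pos2 power_Suc)
  ultimately have "z * z ^ (CARD('p) - 1) = z * 1" by simp
  then show ?thesis using False by simp
qed

lemma univ_expand:
  fixes b :: "'p::prime_card mod_ring"
  shows "\<exists>w. \<forall>y. 1 - (y - b) ^ (CARD('p) - 1) = (\<Sum>k<CARD('p). w k * y ^ k)"
proof (intro exI allI)
  fix y :: "'p mod_ring"
  let ?p = "CARD('p)"
  have p: "{..?p - 1} = {..<?p}" using card_ge2[where 'p='p] by auto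
  have "(y - b) ^ (?p - 1) = (y + - b) ^ (?p - 1)" by simp
  also have "\<dots> = (\<Sum>k\<le>?p - 1. of_nat (?p - 1 choose k) * y ^ k * (- b) ^ (?p - 1 - k))"
    by (rule binomial_ring)
  also have "\<dots> = (\<Sum>k<?p. of_nat (?p - 1 choose k) * (- b) ^ (?p - 1 - k) * y ^ k)"
    unfolding p by (simp add: mult_ac)
  finally have e: "(y - b) ^ (?p - 1) = (\<Sum>k<?p. of_nat (?p - 1 choose k) * (- b) ^ (?p - 1 - k) * y ^ k)" .
  have one: "(\<Sum>k<?p. (if k = 0 then 1 else 0) * y ^ k) = (1 :: 'p mod_ring)"
  proof -
    have eq: "(\<lambda>k. (if k = 0 then 1 else 0) * y ^ k) = (\<lambda>k. if k = 0 then 1 else (0::'p mod_ring))" by auto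
    show ?thesis unfolding eq using card_ge2[where 'p='p] by simp
  qed
  show "1 - (y - b) ^ (?p - 1) =
    (\<Sum>k<?p. ((if k = 0 then 1 else 0) - of_nat (?p - 1 choose k) * (- b) ^ (?p - 1 - k)) * y ^ k)"
    unfolding e left_diff_distrib sum_subtractf one ..
qed

lemma indicator_Poly:
  fixes a :: "'n::finite \<Rightarrow> 'p::prime_card mod_ring"
  shows "Poly UNIV (\<lambda>x. if x = a then 1 else 0)"
proof -
  let ?p = "CARD('p)"
  have "\<forall>j. \<exists>w. \<forall>y. 1 - (y - a j) ^ (?p - 1) = (\<Sum>k<?p. w k * y ^ k)"
    using univ_expand[where 'p='p] by blast
  then have "\<exists>W. \<forall>j. \<forall>y. 1 - (y - a j) ^ (?p - 1) = (\<Sum>k<?p. W j k * y ^ k)"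
    by (rule choice)
  then obtain W where W: "\<And>j y. 1 - (y - a j) ^ (?p - 1) = (\<Sum>k<?p. W j k * y ^ k)"
    by blast
  define c where "c e = (if e \<in> reduced_exps ?p then (\<Prod>j\<in>UNIV. W j (e j)) else 0)" for e :: "'n \<Rightarrow> nat"
  have "(if x = a then 1 else 0) = peval c x" for x
  proof -
    have "(if x = a then 1 else 0) = (\<Prod>j\<in>UNIV. (if x j = a j then 1 else 0 :: 'p mod_ring))"
    proof (cases "x = a")
      case True then show ?thesis by simp
    next
      case False
      then obtain j where "x j \<noteq> a j" by auto
      then have "(\<Prod>j\<in>UNIV. (if x j = a j then 1 else 0 :: 'p mod_ring)) = 0"
        by (intro prod_zero) auto
      then show ?thesis using False by simp
    qed
    also have "\<dots> = (\<Prod>j\<in>UNIV. 1 - (x j - a j) ^ (?p - 1))"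
    proof (intro prod.cong refl)
      fix j
      have "1 - (x j - a j) ^ (?p - 1) = 1 - (if x j - a j = 0 then 0 else 1)"
        by (simp only: pow_pm1)
      then show "(if x j = a j then 1 else 0) = 1 - (x j - a j) ^ (?p - 1)" by simp
    qed
    also have "\<dots> = (\<Prod>j\<in>UNIV. \<Sum>k<?p. W j k * x j ^ k)"
      by (simp only: W)
    also have "\<dots> = (\<Sum>e\<in>PiE UNIV (\<lambda>_. {..<?p}). \<Prod>j\<in>UNIV. W j (e j) * x j ^ (e j))"
      by (rule prod_sum_PiE) auto
    also have "\<dots> = (\<Sum>e\<in>reduced_exps ?p. c e * monom_eval e x)"
      unfolding R_PiE[symmetric]
      by (intro sum.cong refl) (simp add: c_def monom_eval_def prod.distrib)
    finally show ?thesis unfolding peval_def .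
  qed
  then show ?thesis unfolding Poly_def
    by (intro exI[of _ c]) (auto simp: c_def)
qed

lemma all_Poly: "Poly UNIV (f :: ('n::finite \<Rightarrow> 'p::prime_card mod_ring) \<Rightarrow> 'p mod_ring)"
proof -
  have feq: "f = (\<lambda>x. \<Sum>a\<in>UNIV. f a * (if x = a then 1 else 0))"
  proof
    fix x
    have eq: "(\<lambda>a. f a * (if x = a then 1 else 0)) = (\<lambda>a. if x = a then f x else 0)" by auto
    show "f x = (\<Sum>a\<in>UNIV. f a * (if x = a then 1 else 0))" unfolding eq by simp
  qed
  have P: "Poly UNIV (\<lambda>x. \<Sum>a\<in>UNIV. f a * (if x = a then 1 else 0))"
    by (intro Poly_sum Poly_smult indicator_Poly) auto
  show ?thesis by (subst feq) (rule P)
qed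




definition VV :: "(('n::finite \<Rightarrow> nat) \<Rightarrow> 'p::prime_card mod_ring) set" where
  "VV = {c. \<forall>e. e \<notin> reduced_exps CARD('p) \<longrightarrow> c e = 0}"

lemma peval_surj: "(peval :: _ \<Rightarrow> ('n::finite \<Rightarrow> 'p::prime_card mod_ring) \<Rightarrow> _) ` VV = UNIV"
proof -
  have "f \<in> peval ` VV" for f :: "('n \<Rightarrow> 'p mod_ring) \<Rightarrow> 'p mod_ring"
  proof -
  obtain c where c: "\<forall>e. c e \<noteq> 0 \<longrightarrow> e \<in> reduced_exps CARD('p)" "f = peval c"
    using all_Poly[of f] unfolding Poly_def by blast
  then show "f \<in> peval ` VV" unfolding VV_def by blast
  qed
  then show ?thesis by auto
qed

lemma VV_image: "(VV :: (('n::finite \<Rightarrow> nat) \<Rightarrow> 'p::prime_card mod_ring) set) =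
   (\<lambda>h e. if e \<in> reduced_exps CARD('p) then h e else 0) ` (PiE (reduced_exps CARD('p)) (\<lambda>_. UNIV))"
proof (rule equalityI; rule subsetI)
  fix c :: "('n \<Rightarrow> nat) \<Rightarrow> 'p mod_ring"
  assume "c \<in> VV"
  then have "c = (\<lambda>e. if e \<in> reduced_exps CARD('p) then restrict c (reduced_exps CARD('p)) e else 0)"
    unfolding VV_def by (auto simp: fun_eq_iff)
  then show "c \<in> (\<lambda>h e. if e \<in> reduced_exps CARD('p) then h e else 0) ` (PiE (reduced_exps CARD('p)) (\<lambda>_. UNIV))"
    by (intro image_eqI[where x="restrict c (reduced_exps CARD('p))"]) auto
qed (auto simp: VV_def)

lemma VV_inj: "inj_on (\<lambda>h e. if e \<in> reduced_exps CARD('p::prime_card) then h e else (0::'p mod_ring))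
   (PiE (reduced_exps CARD('p) :: ('n::finite \<Rightarrow> nat) set) (\<lambda>_. UNIV))"
proof (rule inj_onI)
  fix h1 h2 :: "('n \<Rightarrow> nat) \<Rightarrow> 'p mod_ring"
  assume h: "h1 \<in> PiE (reduced_exps CARD('p)) (\<lambda>_. UNIV)" "h2 \<in> PiE (reduced_exps CARD('p)) (\<lambda>_. UNIV)"
    and eq: "(\<lambda>e. if e \<in> reduced_exps CARD('p) then h1 e else 0) = (\<lambda>e. if e \<in> reduced_exps CARD('p) then h2 e else 0)"
  have e1: "h1 \<in> extensional (reduced_exps CARD('p))" "h2 \<in> extensional (reduced_exps CARD('p))"
    using h by (auto simp: PiE_def)
  show "h1 = h2"
  proof (rule extensionalityI[OF e1(1) e1(2)])
    fix e :: "'n \<Rightarrow> nat" assume "e \<in> reduced_exps CARD('p)"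
    then show "h1 e = h2 e" using fun_cong[OF eq, of e] by simp
  qed
qed

lemma card_VV: "card (VV :: (('n::finite \<Rightarrow> nat) \<Rightarrow> 'p::prime_card mod_ring) set) = CARD('p) ^ (CARD('p) ^ CARD('n))"
  unfolding VV_image
  by (subst card_image[OF VV_inj]) (simp add: card_PiE finite_R card_R)

lemma finite_VV: "finite (VV :: (('n::finite \<Rightarrow> nat) \<Rightarrow> 'p::prime_card mod_ring) set)"
  unfolding VV_image by (intro finite_imageI finite_PiE finite_R) auto

lemma peval_inj: "inj_on (peval :: _ \<Rightarrow> ('n::finite \<Rightarrow> 'p::prime_card mod_ring) \<Rightarrow> _) VV"
proof (rule eq_card_imp_inj_on[OF finite_VV])
  have "card ((peval :: _ \<Rightarrow> ('n::finite \<Rightarrow> 'p::prime_card mod_ring) \<Rightarrow> _) ` VV)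
      = CARD(('n \<Rightarrow> 'p mod_ring) \<Rightarrow> 'p mod_ring)"
    unfolding peval_surj ..
  also have "\<dots> = CARD('p) ^ (CARD('p) ^ CARD('n))"
    by (simp add: card_fun)
  finally show "card ((peval :: _ \<Rightarrow> ('n::finite \<Rightarrow> 'p::prime_card mod_ring) \<Rightarrow> _) ` VV) = card (VV :: (('n::finite \<Rightarrow> nat) \<Rightarrow> 'p::prime_card mod_ring) set)"
    unfolding card_VV .
qed

lemma coeffs_unique:
  fixes f :: "('n::finite \<Rightarrow> 'p::prime_card mod_ring) \<Rightarrow> 'p mod_ring"
  assumes c: "\<forall>e. e \<notin> reduced_exps CARD('p) \<longrightarrow> c e = 0" and f: "\<forall>x. f x = peval c x"
  shows "coeffs f = c"
  unfolding coeffs_def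
proof (rule the_equality)
  show "(\<forall>e. e \<notin> reduced_exps CARD('p) \<longrightarrow> c e = 0) \<and> (\<forall>x. f x = peval c x)" using c f by blast
next
  fix d assume d: "(\<forall>e. e \<notin> reduced_exps CARD('p) \<longrightarrow> d e = 0) \<and> (\<forall>x. f x = peval d x)"
  have "peval d = peval c" using d f by auto
  moreover have "d \<in> VV" "c \<in> VV" using c d unfolding VV_def by auto
  ultimately show "d = c" using peval_inj[where 'n='n and 'p='p] unfolding inj_on_def by blast
qed

lemma coeffs_Poly:
  fixes g :: "('n::finite \<Rightarrow> 'p::prime_card mod_ring) \<Rightarrow> 'p mod_ring"
  assumes "Poly B g" "coeffs g e \<noteq> 0"
  shows "e \<in> B \<and> e \<in> reduced_exps CARD('p)"
proof -
  obtain c where c: "\<forall>e. c e \<noteq> 0 \<longrightarrow> e \<in> B \<and> e \<in> reduced_exps CARD('p)" "g = peval c"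
    using assms(1) unfolding Poly_def by blast
  have "coeffs g = c" by (rule coeffs_unique) (use c in auto)
  then show ?thesis using c assms(2) by auto
qed

lemma coeffs_rep:
  fixes f :: "('n::finite \<Rightarrow> 'p::prime_card mod_ring) \<Rightarrow> 'p mod_ring"
  shows "(\<forall>e. e \<notin> reduced_exps CARD('p) \<longrightarrow> coeffs f e = 0) \<and> f = peval (coeffs f)"
proof -
  obtain c where c: "\<forall>e. c e \<noteq> 0 \<longrightarrow> e \<in> reduced_exps CARD('p)" "f = peval c"
    using all_Poly[of f] unfolding Poly_def by blast
  have "coeffs f = c" by (rule coeffs_unique) (use c in auto)
  then show ?thesis using c by auto
qed




lemma coeffs_R:
  fixes h :: "('n::finite \<Rightarrow> 'p::prime_card mod_ring) \<Rightarrow> 'p mod_ring"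
  shows "coeffs h e \<noteq> 0 \<Longrightarrow> e \<in> reduced_exps CARD('p)"
  using coeffs_rep[of h] by blast

lemma pdeg_ge:
  fixes h :: "('n::finite \<Rightarrow> 'p::prime_card mod_ring) \<Rightarrow> 'p mod_ring"
  assumes "coeffs h e \<noteq> 0"
  shows "int (sum e UNIV) \<le> pdeg h"
proof -
  have fin: "finite {sum e UNIV | e. coeffs h e \<noteq> 0}"
  proof (rule finite_subset[OF _ finite_imageI[OF finite_R]])
    show "{sum e UNIV | e. coeffs h e \<noteq> 0} \<subseteq> (\<lambda>e. sum e UNIV) ` (reduced_exps CARD('p) :: ('n \<Rightarrow> nat) set)"
      using coeffs_R[of h] by blast
  qed
  have "sum e UNIV \<le> Max {sum e UNIV | e. coeffs h e \<noteq> 0}"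
    by (rule Max_ge[OF fin]) (use assms in blast)
  moreover have nz: "\<not> (\<forall>e. coeffs h e = 0)" using assms by blast
  have eq: "pdeg h = int (Max {sum e UNIV | e. coeffs h e \<noteq> 0})"
    unfolding pdeg_def using nz by (rule if_not_P)
  ultimately show ?thesis by (simp only: of_nat_le_iff)
qed

lemma pdeg_ge_m1: "-1 \<le> pdeg h"
  unfolding pdeg_def by auto

lemma pdeg_le:
  fixes h :: "('n::finite \<Rightarrow> 'p::prime_card mod_ring) \<Rightarrow> 'p mod_ring"
  assumes "\<And>e. coeffs h e \<noteq> 0 \<Longrightarrow> int (sum e UNIV) \<le> b" "-1 \<le> b"
  shows "pdeg h \<le> b"
proof (cases "\<forall>e. coeffs h e = 0")
  case True then show ?thesis unfolding pdeg_def using assms(2) by simp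
next
  case False
  have fin: "finite {sum e UNIV | e. coeffs h e \<noteq> 0}"
  proof (rule finite_subset[OF _ finite_imageI[OF finite_R]])
    show "{sum e UNIV | e. coeffs h e \<noteq> 0} \<subseteq> (\<lambda>e. sum e UNIV) ` (reduced_exps CARD('p) :: ('n \<Rightarrow> nat) set)"
      using coeffs_R[of h] by blast
  qed
  have "Max {sum e UNIV | e. coeffs h e \<noteq> 0} \<in> {sum e UNIV | e. coeffs h e \<noteq> 0}"
    by (rule Max_in[OF fin]) (use False in blast)
  then obtain e where "coeffs h e \<noteq> 0" "Max {sum e UNIV | e. coeffs h e \<noteq> 0} = sum e UNIV" by blast
  then show ?thesis unfolding pdeg_def using False assms(1) by auto
qed

lemma fS_eq:
  fixes f :: "('n::finite \<Rightarrow> 'p::prime_card mod_ring) \<Rightarrow> 'p mod_ring"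
    and "is" :: "'n list" and ms :: "nat list"
  defines "t \<equiv> texp is ms"
  defines "g \<equiv> (\<lambda>e'. if e' \<in> reduced_exps CARD('p) then coeffs f (\<lambda>j. e' j + t j) else 0)"
  shows "fS is ms f x = peval g x"
proof -
  let ?R = "reduced_exps CARD('p) :: ('n \<Rightarrow> nat) set"
  have "fS is ms f x = (\<Sum>e\<in>{e\<in>?R. \<forall>j. t j \<le> e j}. coeffs f e * monom_eval (\<lambda>j. e j - t j) x)"
    unfolding fS_def t_def by (simp add: sum.inter_filter finite_R)
  also have "\<dots> = (\<Sum>e'\<in>{e'\<in>?R. (\<lambda>j. e' j + t j) \<in> ?R}. coeffs f (\<lambda>j. e' j + t j) * monom_eval e' x)"
  proof (rule sym, rule sum.reindex_bij_witness[where i="\<lambda>e j. e j - t j" and j="\<lambda>e' j. e' j + t j"])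
    fix a assume "a \<in> {e' \<in> ?R. (\<lambda>j. e' j + t j) \<in> ?R}"
    then show "(\<lambda>j. (\<lambda>j. a j + t j) j - t j) = a" "(\<lambda>j. a j + t j) \<in> {e \<in> ?R. \<forall>j. t j \<le> e j}"
      "coeffs f (\<lambda>j. a j + t j) * monom_eval (\<lambda>j. (\<lambda>j. a j + t j) j - t j) x =
       coeffs f (\<lambda>j. a j + t j) * monom_eval a x"
      by auto
  next
    fix b assume b: "b \<in> {e \<in> ?R. \<forall>j. t j \<le> e j}"
    then show "(\<lambda>j. (\<lambda>j. b j - t j) j + t j) = b" by auto
    have "(\<lambda>j. b j - t j + t j) = b" using b by auto
    then show "(\<lambda>j. b j - t j) \<in> {e' \<in> ?R. (\<lambda>j. e' j + t j) \<in> ?R}"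
      using b by (auto simp: reduced_exps_def intro: le_less_trans[OF diff_le_self])
  qed
  also have "\<dots> = (\<Sum>e'\<in>?R. g e' * monom_eval e' x)"
  proof (rule sum.mono_neutral_cong_left)
    show "finite ?R" by (rule finite_R)
    show "{e' \<in> ?R. (\<lambda>j. e' j + t j) \<in> ?R} \<subseteq> ?R" by blast
    show "\<forall>i\<in>?R - {e' \<in> ?R. (\<lambda>j. e' j + t j) \<in> ?R}. g i * monom_eval i x = 0"
      using coeffs_R[of f] unfolding g_def by auto
    show "\<And>xa. xa \<in> {e' \<in> ?R. (\<lambda>j. e' j + t j) \<in> ?R} \<Longrightarrow>
         coeffs f (\<lambda>j. xa j + t j) * monom_eval xa x = g xa * monom_eval xa x"
      unfolding g_def by auto
  qed
  finally show ?thesis unfolding peval_def .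
qed

theorem mainTheorem8:
  fixes f :: "('n::finite \<Rightarrow> 'p::prime_card mod_ring) \<Rightarrow> 'p mod_ring"
    and "is" :: "'n list" and ms :: "nat list"
  assumes "distinct is"
    and "length ms = length is"
    and "\<forall>m\<in>set ms. 1 \<le> m \<and> m \<le> CARD('p) - 1"
  shows "pdeg (ft is ms f) \<le> pdeg (fS is ms f)
         \<and> (int (sum_list ms) = pdeg f - 1 \<longrightarrow> pdeg (ft is ms f) \<le> 1)"
proof -
  let ?R = "reduced_exps CARD('p) :: ('n \<Rightarrow> nat) set"
  define t where "t = texp is ms"
  define Bf where "Bf = {d. coeffs f d \<noteq> 0}"
  have P0: "Poly (U Bf (\<lambda>_. 0)) f"
    unfolding Poly_def
  proof (intro exI[of _ "coeffs f"] conjI)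
    show "\<forall>e. coeffs f e \<noteq> 0 \<longrightarrow> e \<in> U Bf (\<lambda>_. 0) \<and> e \<in> ?R"
      using coeffs_R[of f] unfolding U_def Bf_def by auto
    show "f = peval (coeffs f)" using coeffs_rep[of f] by blast
  qed
  have P1: "Poly (U Bf (\<lambda>j. 0 + texp is ms j)) (ft is ms f)"
    by (rule Poly_ft[OF assms(2) P0])
  have supp: "\<exists>d. coeffs f d \<noteq> 0 \<and> (\<forall>j. e j + t j \<le> d j)" if "coeffs (ft is ms f) e \<noteq> 0" for e
    using coeffs_Poly[OF P1 that] unfolding U_def Bf_def t_def by auto
  define g where "g = (\<lambda>e'. if e' \<in> ?R then coeffs f (\<lambda>j. e' j + t j) else 0)"
  have cS: "coeffs (fS is ms f) = g"
  proof (rule coeffs_unique)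
    show "\<forall>e. e \<notin> ?R \<longrightarrow> g e = 0" unfolding g_def by auto
    show "\<forall>x. fS is ms f x = peval g x" unfolding g_def t_def by (intro allI fS_eq)
  qed
  have st: "sum t UNIV = sum_list ms" unfolding t_def by (rule sum_texp[OF assms(2)])
  have part1: "pdeg (ft is ms f) \<le> pdeg (fS is ms f)"
  proof (rule pdeg_le[OF _ pdeg_ge_m1])
    fix e assume "coeffs (ft is ms f) e \<noteq> 0"
    then obtain d where d: "coeffs f d \<noteq> 0" "\<forall>j. e j + t j \<le> d j" using supp by blast
    have dR: "d \<in> ?R" using coeffs_R[OF d(1)] .
    define e' where "e' = (\<lambda>j. d j - t j)"
    have e'R: "e' \<in> ?R" using dR unfolding e'_def reduced_exps_def by (auto intro: le_less_trans[OF diff_le_self])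
    have tl: "\<forall>j. t j \<le> d j" using d(2) by (metis add_leD2)
    have de: "(\<lambda>j. e' j + t j) = d" unfolding e'_def by (simp add: fun_eq_iff tl le_add_diff_inverse2)
    have "coeffs (fS is ms f) e' \<noteq> 0" unfolding cS g_def using e'R de d(1) by simp
    then have "int (sum e' UNIV) \<le> pdeg (fS is ms f)" by (rule pdeg_ge)
    moreover have "sum e UNIV \<le> sum e' UNIV"
      by (rule sum_mono) (use d(2) in \<open>auto simp: e'_def le_diff_conv2 tl\<close>)
    ultimately show "int (sum e UNIV) \<le> pdeg (fS is ms f)" by linarith
  qed
  have part2: "pdeg (ft is ms f) \<le> 1" if h: "int (sum_list ms) = pdeg f - 1"
  proof (rule pdeg_le)
    fix e assume "coeffs (ft is ms f) e \<noteq> 0"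
    then obtain d where d: "coeffs f d \<noteq> 0" "\<forall>j. e j + t j \<le> d j" using supp by blast
    have "int (sum d UNIV) \<le> pdeg f" by (rule pdeg_ge[OF d(1)])
    moreover have "sum e UNIV + sum t UNIV \<le> sum d UNIV"
      unfolding sum.distrib[symmetric] by (rule sum_mono) (use d(2) in auto)
    ultimately show "int (sum e UNIV) \<le> 1" using h st by linarith
  qed simp
  show ?thesis using part1 part2 by blast
qed


end
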